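(* Let $\mathbf{A}\in\mathbb{R}^{p\times q}$ have full row rank, let $\mathbf{W}\in\mathbb{R}^{q\times q}$ be symmetric positive semidefinite (the neural tangent kernel of the network), let $\eta>0$, and let $\mathbf{x}\in\mathbb{R}^q$ be the ground truth image. Suppose the measurements are $\mathbf{y}=\mathbf{A}\mathbf{x}+\mathbf{n}$ with $\mathbf{n}\in\mathbb{R}^p$, $\mathbf{n}\sim\mathcal{N}(\mathbf{0},\sigma^2\mathbf{I})$. Define the iterates $$\mathbf{z}_{t+1}=\mathbf{z}_t+\eta\,\mathbf{W}\left(\mathbf{A}^T\mathbf{y}-\mathbf{A}^T\mathbf{A}\mathbf{z}_t\right),\qquad \mathbf{z}_0=\mathbf{0}.$$ Then the mean squared error $\mathrm{MSE}_t:=\mathbb{E}_{\mathbf{n}}\|\mathbf{z}_t-\mathbf{x}\|_2^2$ at iteration $t$ is $$\mathrm{MSE}_t=\left\|\left(\mathbf{I}-\eta\mathbf{W}\mathbf{A}^T\mathbf{A}\right)^t\mathbf{x}\right\|_2^2+\sigma^2\sum_{i=1}^p\nu_{t,i}^2,$$ where $\nu_{t,1},\dots,\nu_{t,p}$ are the singular values of the matrix $\left(\mathbf{I}-(\mathbf{I}-\eta\mathbf{W}\mathbf{A}^T\mathbf{A})^t\right)\mathbf{A}^{\dagger}$.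
   Context: $\mathbf{A}^\dagger$ denotes the Moore–Penrose pseudo-inverse of $\mathbf{A}$. The recursion models gradient-descent training of a deep image prior network with loss $\|\mathbf{A}f_\theta(\mathbf{z})-\mathbf{y}\|_2^2$ in the regime where the neural tangent kernel $\mathbf{W}$ stays fixed, with $\mathbf{z}_t$ the network output at iteration $t$. The MSE is decomposed as squared norm of the bias $\mathbb{E}_{\mathbf{n}}[\mathbf{z}_t]-\mathbf{x}$ plus the trace of the covariance of $\mathbf{z}_t$. *)

theory Defs
  imports "HOL-Analysis.Analysis" "HOL-Probability.Probability"
begin

text \<open>Matrices are represented as \<open>real^'cols^'rows\<close> (HOL-Analysis).\<close>

text \<open>Matrix power (the vec type's own power is componentwise, hence this definition).\<close>
primrec mpow :: "real^'n^'n \<Rightarrow> nat \<Rightarrow> real^'n^'n" where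
  "mpow M 0 = mat 1"
| "mpow M (Suc t) = M ** mpow M t"

definition pinv :: "real^'q^'p \<Rightarrow> real^'p^'q" where
  "pinv A = (THE X. A ** X ** A = A \<and> X ** A ** X = X \<and>
                    transpose (A ** X) = A ** X \<and> transpose (X ** A) = X ** A)"

definition sym_psd :: "real^'n^'n \<Rightarrow> bool" where
  "sym_psd W \<longleftrightarrow> transpose W = W \<and> (\<forall>v. 0 \<le> v \<bullet> (W *v v))"

text \<open>Singular values of a \<open>q \<times> p\<close> matrix \<open>M\<close> (with \<open>p \<le> q\<close>), via a thin SVD
  \<open>M = U diag(\<nu>) V^T\<close>, \<open>U\<close> with orthonormal columns, \<open>V\<close> orthogonal, \<open>\<nu> \<ge> 0\<close>.\<close>
definition singular_values :: "real^'p^'q \<Rightarrow> ('p \<Rightarrow> real) \<Rightarrow> bool" where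
  "singular_values M \<nu> \<longleftrightarrow> (\<forall>i. 0 \<le> \<nu> i) \<and>
     (\<exists>(U::real^'p^'q) (V::real^'p^'p).
        transpose U ** U = mat 1 \<and> transpose V ** V = mat 1 \<and>
        M = U ** (\<chi> i j. if i = j then \<nu> i else 0) ** transpose V)"

primrec dip_iter :: "real \<Rightarrow> real^'q^'q \<Rightarrow> real^'q^'p \<Rightarrow> real^'p \<Rightarrow> nat \<Rightarrow> real^'q" where
  "dip_iter \<eta> W A y 0 = 0"
| "dip_iter \<eta> W A y (Suc t) =
     dip_iter \<eta> W A y t + \<eta> *\<^sub>R (W *v (transpose A *v y - transpose A *v (A *v dip_iter \<eta> W A y t)))"

definition gaussian_vec :: "real \<Rightarrow> (real^'p) measure" where
  "gaussian_vec \<sigma> = distr (PiM UNIV (\<lambda>_. density lborel (normal_density 0 \<sigma>))) borel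
                         (\<lambda>f. \<chi> i. f i)"

end

theory Submission
  imports Defs
begin


lemma vec_meas: "(\<lambda>f. (\<chi> i. f i)::real^'p) \<in> borel_measurable (PiM (UNIV::'p::finite set) (\<lambda>_. density lborel (normal_density 0 \<sigma>)))"
proof (rule borel_measurable_euclidean_space[THEN iffD2], intro ballI)
  fix b :: "real^'p" assume "b \<in> Basis"
  then obtain i where b: "b = axis i 1" by (auto simp: Basis_vec_def)
  have eq: "(\<lambda>x. (\<chi> i. x i) \<bullet> b) = (\<lambda>x. x i)" by (simp add: b inner_axis)
  show "(\<lambda>x. (\<chi> i. x i) \<bullet> b) \<in> borel_measurable (PiM (UNIV::'p::finite set) (\<lambda>_. density lborel (normal_density 0 \<sigma>)))"
    unfolding eq by measurable
qed

lemma normal_int: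
  fixes \<sigma> :: real and k :: nat
  assumes "\<sigma> > 0" "k \<le> 2"
  shows "integrable (density lborel (normal_density 0 \<sigma>)) (\<lambda>x. x ^ k)"
    "(\<integral>x. x ^ k \<partial>density lborel (normal_density 0 \<sigma>)) = (if k = 0 then 1 else if k = 1 then 0 else \<sigma>\<^sup>2)"
proof -
  show "integrable (density lborel (normal_density 0 \<sigma>)) (\<lambda>x. x ^ k)"
    using integrable_normal_moment[OF assms(1), of 0 k]
    by (subst integrable_density) auto
  have "(\<integral>x. x ^ k \<partial>density lborel (normal_density 0 \<sigma>)) = (\<integral>x. normal_density 0 \<sigma> x * (x - 0) ^ k \<partial>lborel)"
    by (subst integral_density) auto
  also have "\<dots> = (if k = 0 then 1 else if k = 1 then 0 else \<sigma>\<^sup>2)"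
  proof -
    have "k = 0 \<or> k = 1 \<or> k = 2" using assms(2) by auto
    moreover have "(\<integral>x. normal_density 0 \<sigma> x * (x - 0) ^ (2*1) \<partial>lborel) = \<sigma>\<^sup>2"
      using integral_normal_moment_even[OF assms(1), of 0 1] by (simp add: field_simps)
    moreover have "(\<integral>x. normal_density 0 \<sigma> x * (x - 0) ^ (2*0+1) \<partial>lborel) = 0"
      using integral_normal_moment_odd[OF assms(1), of 0 0] by simp
    ultimately show ?thesis using integral_normal_density[OF assms(1)] by auto
  qed
  finally show "(\<integral>x. x ^ k \<partial>density lborel (normal_density 0 \<sigma>)) = (if k = 0 then 1 else if k = 1 then 0 else \<sigma>\<^sup>2)" .
qed

lemma prod_moment:
  fixes \<sigma> :: real and e :: "'p::finite \<Rightarrow> nat"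
  assumes "\<sigma> > 0" "\<And>l. e l \<le> 2"
  shows "integrable (PiM UNIV (\<lambda>_. density lborel (normal_density 0 \<sigma>))) (\<lambda>\<omega>. \<Prod>l\<in>UNIV. \<omega> l ^ e l)"
    "(\<integral>\<omega>. (\<Prod>l\<in>UNIV. \<omega> l ^ e l) \<partial>PiM UNIV (\<lambda>_. density lborel (normal_density 0 \<sigma>)))
      = (\<Prod>l\<in>UNIV. (if e l = 0 then 1 else if e l = 1 then 0 else \<sigma>\<^sup>2))"
proof -
  interpret N: prob_space "density lborel (normal_density 0 \<sigma>)"
    using prob_space_normal_density[OF assms(1)] .
  interpret PS: product_prob_space "\<lambda>_::'p. density lborel (normal_density 0 \<sigma>)" "UNIV :: 'p set"
    by unfold_locales
  show "integrable (PiM UNIV (\<lambda>_. density lborel (normal_density 0 \<sigma>))) (\<lambda>\<omega>. \<Prod>l\<in>UNIV. \<omega> l ^ e l)"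
    by (rule PS.product_integrable_prod) (auto intro: normal_int[OF assms(1)] assms(2))
  have "(\<integral>\<omega>. (\<Prod>l\<in>UNIV. \<omega> l ^ e l) \<partial>PiM UNIV (\<lambda>_. density lborel (normal_density 0 \<sigma>)))
      = (\<Prod>l\<in>UNIV. (\<integral>x. x ^ e l \<partial>density lborel (normal_density 0 \<sigma>)))"
    by (rule PS.product_integral_prod) (auto intro: normal_int[OF assms(1)] assms(2))
  also have "\<dots> = (\<Prod>l\<in>UNIV. (if e l = 0 then 1 else if e l = 1 then 0 else \<sigma>\<^sup>2))"
    by (intro prod.cong refl normal_int[OF assms(1)] assms(2))
  finally show "(\<integral>\<omega>. (\<Prod>l\<in>UNIV. \<omega> l ^ e l) \<partial>PiM UNIV (\<lambda>_. density lborel (normal_density 0 \<sigma>)))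
      = (\<Prod>l\<in>UNIV. (if e l = 0 then 1 else if e l = 1 then 0 else \<sigma>\<^sup>2))" .
qed

lemma pow_if1: "(x::real) ^ (if c then 1 else 0) = (if c then x else 1)" by simp

lemma moment2:
  fixes \<sigma> :: real and i k :: "'p::finite"
  assumes "\<sigma> > 0"
  shows "integrable (PiM UNIV (\<lambda>_. density lborel (normal_density 0 \<sigma>))) (\<lambda>\<omega>. \<omega> i * \<omega> k)"
    "(\<integral>\<omega>. \<omega> i * \<omega> k \<partial>PiM UNIV (\<lambda>_. density lborel (normal_density 0 \<sigma>))) = (if i = k then \<sigma>\<^sup>2 else 0)"
proof -
  define e where "e l = (if l = i then 1 else 0) + (if l = k then 1 else (0::nat))" for l
  have e2: "\<And>l. e l \<le> 2" by (simp add: e_def)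
  have eq: "(\<lambda>\<omega>. \<Prod>l\<in>UNIV. \<omega> l ^ e l) = (\<lambda>\<omega>::'p\<Rightarrow>real. \<omega> i * \<omega> k)"
    by (simp add: e_def power_add prod.distrib pow_if1 prod.delta)
  show "integrable (PiM UNIV (\<lambda>_. density lborel (normal_density 0 \<sigma>))) (\<lambda>\<omega>. \<omega> i * \<omega> k)"
    using prod_moment(1)[of \<sigma> e, OF assms e2] unfolding eq .
  have "(\<integral>\<omega>. \<omega> i * \<omega> k \<partial>PiM UNIV (\<lambda>_. density lborel (normal_density 0 \<sigma>)))
     = (\<Prod>l\<in>UNIV. (if e l = 0 then 1 else if e l = 1 then 0 else \<sigma>\<^sup>2))"
    using prod_moment(2)[of \<sigma> e, OF assms e2] unfolding eq .
  also have "\<dots> = (if i = k then \<sigma>\<^sup>2 else 0)"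
  proof (cases "i = k")
    case True
    then have "\<And>l. (if e l = 0 then 1 else if e l = 1 then 0 else \<sigma>\<^sup>2) = (if l = i then \<sigma>\<^sup>2 else 1)"
      by (simp add: e_def)
    then show ?thesis using True by (simp add: prod.delta)
  next
    case False
    then have "(if e i = 0 then 1 else if e i = 1 then 0 else \<sigma>\<^sup>2) = 0" by (simp add: e_def)
    then show ?thesis using False by (simp only: if_False, subst prod_zero_iff) (simp, blast)
  qed
  finally show "(\<integral>\<omega>. \<omega> i * \<omega> k \<partial>PiM UNIV (\<lambda>_. density lborel (normal_density 0 \<sigma>))) = (if i = k then \<sigma>\<^sup>2 else 0)" .
qed

lemma moment1:
  fixes \<sigma> :: real and i :: "'p::finite"
  assumes "\<sigma> > 0"
  shows "integrable (PiM UNIV (\<lambda>_. density lborel (normal_density 0 \<sigma>))) (\<lambda>\<omega>. \<omega> i)"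
    "(\<integral>\<omega>. \<omega> i \<partial>PiM UNIV (\<lambda>_. density lborel (normal_density 0 \<sigma>))) = 0"
proof -
  define e where "e l = (if l = i then 1 else (0::nat))" for l
  have e2: "\<And>l. e l \<le> 2" by (simp add: e_def)
  have eq: "(\<lambda>\<omega>. \<Prod>l\<in>UNIV. \<omega> l ^ e l) = (\<lambda>\<omega>::'p\<Rightarrow>real. \<omega> i)"
    by (simp add: e_def pow_if1 prod.delta)
  show "integrable (PiM UNIV (\<lambda>_. density lborel (normal_density 0 \<sigma>))) (\<lambda>\<omega>. \<omega> i)"
    using prod_moment(1)[of \<sigma> e, OF assms e2] unfolding eq .
  have "(\<integral>\<omega>. \<omega> i \<partial>PiM UNIV (\<lambda>_. density lborel (normal_density 0 \<sigma>)))
     = (\<Prod>l\<in>UNIV. (if e l = 0 then 1 else if e l = 1 then 0 else \<sigma>\<^sup>2))"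
    using prod_moment(2)[of \<sigma> e, OF assms e2] unfolding eq .
  also have "\<dots> = 0"
    by (subst prod_zero_iff) (auto simp: e_def)
  finally show "(\<integral>\<omega>. \<omega> i \<partial>PiM UNIV (\<lambda>_. density lborel (normal_density 0 \<sigma>))) = 0" .
qed

lemma gauss_quad:
  fixes M :: "real^'p::finite^'q::finite" and c :: "real^'q" and \<sigma> :: real
  assumes "\<sigma> > 0"
  shows "(\<integral>n. (norm (M *v n - c))\<^sup>2 \<partial>gaussian_vec \<sigma>)
    = (norm c)\<^sup>2 + \<sigma>\<^sup>2 * (\<Sum>j\<in>UNIV. \<Sum>i\<in>UNIV. (M$j$i)\<^sup>2)"
proof -
  define P where "P = PiM (UNIV::'p set) (\<lambda>_. density lborel (normal_density 0 \<sigma>))"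
  interpret N: prob_space "density lborel (normal_density 0 \<sigma>)"
    using prob_space_normal_density[OF assms(1)] .
  interpret PS: product_prob_space "\<lambda>_::'p. density lborel (normal_density 0 \<sigma>)" "UNIV :: 'p set"
    by unfold_locales
  interpret P: prob_space P unfolding P_def by (rule PS.P.prob_space_axioms)
  have nc: "(norm c)\<^sup>2 = (\<Sum>j\<in>UNIV. c$j * c$j)"
    by (simp only: power2_norm_eq_inner inner_vec_def inner_real_def)
  have cont: "continuous_on UNIV (\<lambda>n. M *v n)"
    by (rule linear_continuous_on[OF matrix_vector_mul_bounded_linear])
  have gm: "(\<lambda>n. (norm (M *v n - c))\<^sup>2) \<in> borel_measurable borel"
    by (intro borel_measurable_continuous_onI continuous_intros cont)
  have "(\<integral>n. (norm (M *v n - c))\<^sup>2 \<partial>gaussian_vec \<sigma>) = (\<integral>\<omega>. (norm (M *v (\<chi> i. \<omega> i) - c))\<^sup>2 \<partial>P)"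
    unfolding gaussian_vec_def P_def by (rule integral_distr[OF vec_meas gm])
  also have "\<dots> = (\<integral>\<omega>. (\<Sum>j\<in>UNIV. (\<Sum>i\<in>UNIV. \<Sum>k\<in>UNIV. (M$j$i * M$j$k) * (\<omega> i * \<omega> k))
       - (2 * c$j) * (\<Sum>i\<in>UNIV. M$j$i * \<omega> i) + (c$j)\<^sup>2) \<partial>P)"
  proof (rule Bochner_Integration.integral_cong[OF refl])
    fix \<omega> :: "'p \<Rightarrow> real"
    have "(norm (M *v (\<chi> i. \<omega> i) - c))\<^sup>2 = (\<Sum>j\<in>UNIV. ((\<Sum>i\<in>UNIV. M$j$i * \<omega> i) - c$j)\<^sup>2)"
      unfolding power2_norm_eq_inner by (simp add: inner_vec_def matrix_vector_mult_def power2_eq_square)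
    also have "\<dots> = (\<Sum>j\<in>UNIV. (\<Sum>i\<in>UNIV. \<Sum>k\<in>UNIV. (M$j$i * M$j$k) * (\<omega> i * \<omega> k))
       - (2 * c$j) * (\<Sum>i\<in>UNIV. M$j$i * \<omega> i) + (c$j)\<^sup>2)"
    proof (rule sum.cong[OF refl])
      fix j
      have e: "(S - x)\<^sup>2 = S*S - (2*x)*S + x\<^sup>2" for S x :: real by (simp add: power2_eq_square algebra_simps)
      have pe: "(\<Sum>i\<in>UNIV. M$j$i * \<omega> i) * (\<Sum>i\<in>UNIV. M$j$i * \<omega> i) = (\<Sum>i\<in>UNIV. \<Sum>k\<in>UNIV. (M$j$i * M$j$k) * (\<omega> i * \<omega> k))"
        by (simp add: sum_product mult_ac)
      then show "((\<Sum>i\<in>UNIV. M$j$i * \<omega> i) - c$j)\<^sup>2 = (\<Sum>i\<in>UNIV. \<Sum>k\<in>UNIV. (M$j$i * M$j$k) * (\<omega> i * \<omega> k))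
       - (2 * c$j) * (\<Sum>i\<in>UNIV. M$j$i * \<omega> i) + (c$j)\<^sup>2"
        by (simp only: e pe)
    qed
    finally show "(norm (M *v (\<chi> i. \<omega> i) - c))\<^sup>2 = (\<Sum>j\<in>UNIV. (\<Sum>i\<in>UNIV. \<Sum>k\<in>UNIV. (M$j$i * M$j$k) * (\<omega> i * \<omega> k))
       - (2 * c$j) * (\<Sum>i\<in>UNIV. M$j$i * \<omega> i) + (c$j)\<^sup>2)" .
  qed
  also have "\<dots> = (\<Sum>j\<in>UNIV. (\<Sum>i\<in>UNIV. \<Sum>k\<in>UNIV. (M$j$i * M$j$k) * (if i = k then \<sigma>\<^sup>2 else 0))
       - (2 * c$j) * (\<Sum>i\<in>UNIV. M$j$i * 0) + (c$j)\<^sup>2)"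
  proof (rule has_bochner_integral_integral_eq)
    have h2: "has_bochner_integral P (\<lambda>\<omega>. \<omega> i * \<omega> k) (if i = k then \<sigma>\<^sup>2 else 0)" for i k
      unfolding P_def has_bochner_integral_iff using moment2[OF assms(1), of i k] by simp
    have h1: "has_bochner_integral P (\<lambda>\<omega>. \<omega> i) 0" for i
      unfolding P_def has_bochner_integral_iff using moment1[OF assms(1), of i] by simp
    have h0: "has_bochner_integral P (\<lambda>\<omega>. a) a" for a :: real
      unfolding has_bochner_integral_iff by (simp add: P.prob_space)
    show "has_bochner_integral P (\<lambda>\<omega>. \<Sum>j\<in>UNIV. (\<Sum>i\<in>UNIV. \<Sum>k\<in>UNIV. (M$j$i * M$j$k) * (\<omega> i * \<omega> k))
       - (2 * c$j) * (\<Sum>i\<in>UNIV. M$j$i * \<omega> i) + (c$j)\<^sup>2)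
      (\<Sum>j\<in>UNIV. (\<Sum>i\<in>UNIV. \<Sum>k\<in>UNIV. (M$j$i * M$j$k) * (if i = k then \<sigma>\<^sup>2 else 0))
       - (2 * c$j) * (\<Sum>i\<in>UNIV. M$j$i * 0) + (c$j)\<^sup>2)"
      by (intro has_bochner_integral_sum has_bochner_integral_add has_bochner_integral_diff
          has_bochner_integral_mult_right h0 h1 h2)
  qed
  also have "\<dots> = (norm c)\<^sup>2 + \<sigma>\<^sup>2 * (\<Sum>j\<in>UNIV. \<Sum>i\<in>UNIV. (M$j$i)\<^sup>2)"
    using nc by (simp add: if_distrib sum.If_cases sum.distrib
        sum_distrib_left power2_eq_square mult_ac)
  finally show ?thesis .
qed



lemma frob_sv:
  fixes M :: "real^'p::finite^'q::finite"
  assumes "singular_values M \<nu>"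
  shows "(\<Sum>j\<in>UNIV. \<Sum>i\<in>UNIV. (M$j$i)\<^sup>2) = (\<Sum>i\<in>UNIV. (\<nu> i)\<^sup>2)"
proof -
  define D :: "real^'p^'p" where "D = (\<chi> i j. if i = j then \<nu> i else 0)"
  obtain U :: "real^'p^'q" and V :: "real^'p^'p" where UU: "transpose U ** U = mat 1"
    and VV: "transpose V ** V = mat 1" and M: "M = U ** D ** transpose V"
    using assms unfolding singular_values_def D_def by blast
  have tD: "transpose D = D" by (simp add: D_def transpose_def vec_eq_iff)
  have "(\<Sum>j\<in>UNIV. \<Sum>i\<in>UNIV. (M$j$i)\<^sup>2) = trace (transpose M ** M)"
    by (simp add: trace_def matrix_matrix_mult_def transpose_def power2_eq_square sum.swap[of _ "UNIV::'q set"])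
  also have "transpose M ** M = V ** ((D ** D) ** transpose V)"
  proof -
    have "transpose M ** M = V ** transpose D ** (transpose U ** U) ** D ** transpose V"
      by (simp add: M matrix_transpose_mul matrix_mul_assoc)
    then show ?thesis by (simp add: UU tD matrix_mul_assoc)
  qed
  also have "trace \<dots> = trace (((D ** D) ** transpose V) ** V)" by (rule trace_mul_sym)
  also have "\<dots> = trace (D ** D)" by (simp add: matrix_mul_assoc[symmetric] VV)
  also have "\<dots> = (\<Sum>i\<in>UNIV. (\<nu> i)\<^sup>2)"
    by (simp add: trace_def matrix_matrix_mult_def D_def power2_eq_square if_distrib sum.delta cong: if_cong)
  finally show ?thesis .
qed

lemma pinv_right:
  fixes A :: "real^'q::finite^'p::finite"
  assumes rk: "rank A = CARD('p)"
  shows "A ** pinv A = mat 1"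
proof -
  obtain R where AR: "A ** R = mat 1"
    using full_rank_surjective[THEN iffD1, OF rk] matrix_right_invertible_surjective by blast
  define G where "G = A ** transpose A"
  have tG: "transpose G = G" by (simp add: G_def matrix_transpose_mul)
  have "\<forall>v. G *v v = 0 \<longrightarrow> v = 0"
  proof (intro allI impI)
    fix v assume "G *v v = 0"
    then have "A *v (transpose A *v v) = 0"
      by (simp only: G_def matrix_vector_mul_assoc)
    then have "(v v* A) \<bullet> (transpose A *v v) = 0"
      by (simp only: dot_lmul_matrix) simp
    then have "(transpose A *v v) \<bullet> (transpose A *v v) = 0"
      by (simp only: transpose_matrix_vector)
    then have "transpose A *v v = 0" by simp
    then have "transpose R *v (transpose A *v v) = 0" by (simp only: matrix_vector_mult_0_right)
    then have "(transpose R ** transpose A) *v v = 0" by (simp only: matrix_vector_mul_assoc)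
    then show "v = 0"
      by (simp only: matrix_transpose_mul[symmetric] AR transpose_mat matrix_vector_mul_lid)
  qed
  then obtain Gi where GiG: "Gi ** G = mat 1" using matrix_left_invertible_ker by blast
  then have GGi: "G ** Gi = mat 1" using matrix_left_right_inverse by blast
  have tGi: "transpose Gi = Gi"
  proof -
    have "transpose Gi ** G = mat 1"
      by (metis GGi matrix_transpose_mul tG transpose_mat)
    have "transpose Gi = (transpose Gi ** G) ** Gi" by (metis GGi matrix_mul_assoc matrix_mul_rid)
    also have "\<dots> = Gi" by (simp add: \<open>transpose Gi ** G = mat 1\<close>)
    finally show ?thesis .
  qed
  define X where "X = transpose A ** Gi"
  have AX: "A ** X = mat 1" by (simp add: X_def matrix_mul_assoc G_def[symmetric] GGi)
  have PX: "A ** X ** A = A \<and> X ** A ** X = X \<and> transpose (A ** X) = A ** X \<and> transpose (X ** A) = X ** A"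
  proof (intro conjI)
    show "A ** X ** A = A" by (simp add: AX)
    show "X ** A ** X = X" by (simp add: AX matrix_mul_assoc[symmetric])
    show "transpose (A ** X) = A ** X" by (simp add: AX)
    show "transpose (X ** A) = X ** A" by (simp add: X_def matrix_transpose_mul tGi matrix_mul_assoc)
  qed
  have uniq: "Y = X" if "A ** Y ** A = A \<and> Y ** A ** Y = Y \<and> transpose (A ** Y) = A ** Y \<and> transpose (Y ** A) = Y ** A" for Y
  proof -
    have AYA: "A ** Y ** A = A" and YAY: "Y ** A ** Y = Y" and sYA: "transpose (Y ** A) = Y ** A"
      using that by auto
    have AY: "A ** Y = mat 1"
    proof -
      have "A ** Y = A ** Y ** (A ** X)" by (simp add: AX)
      also have "\<dots> = (A ** Y ** A) ** X" by (simp add: matrix_mul_assoc)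
      also have "\<dots> = mat 1" by (simp add: AYA AX)
      finally show ?thesis .
    qed
    define Z where "Z = transpose Y ** Y"
    have Y: "Y = transpose A ** Z"
    proof -
      have "Y = (Y ** A) ** Y" using YAY by (simp add: matrix_mul_assoc)
      also have "\<dots> = transpose (Y ** A) ** Y" by (simp add: sYA)
      also have "\<dots> = transpose A ** Z" by (simp add: Z_def matrix_transpose_mul matrix_mul_assoc)
      finally show ?thesis .
    qed
    have "G ** Z = mat 1" using AY by (simp add: G_def matrix_mul_assoc[symmetric] Y[symmetric])
    then have "Gi ** (G ** Z) = Gi" by simp
    then have "Z = Gi" by (simp add: matrix_mul_assoc GiG)
    then show ?thesis by (simp add: Y X_def)
  qed
  have "pinv A = X"
    unfolding pinv_def
    apply (rule the_equality)
     apply (rule PX)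
    apply (erule uniq)
    done
  then show ?thesis using AX by simp
qed

lemmas mv_simps = matrix_vector_mul_assoc[symmetric] matrix_vector_mult_diff_rdistrib
  matrix_vector_mult_add_rdistrib scaleR_matrix_vector_assoc[symmetric] matrix_vector_mult_diff_distrib
  matrix_vector_right_distrib matrix_vector_mult_scaleR

lemma mpow_KA:
  fixes A :: "real^'q::finite^'p::finite" and W :: "real^'q^'q"
  shows "\<exists>K. mat 1 - mpow (mat 1 - \<eta> *\<^sub>R (W ** transpose A ** A)) t = K ** A"
proof (induction t)
  case 0
  show ?case by (rule exI[of _ 0]) simp
next
  case (Suc t)
  define B where "B = mat 1 - \<eta> *\<^sub>R (W ** transpose A ** A)"
  from Suc obtain K where K: "mat 1 - mpow B t = K ** A" unfolding B_def by blast
  have Bv: "B *v v = v - \<eta> *\<^sub>R (W *v (transpose A *v (A *v v)))" for v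
    by (simp add: B_def mv_simps del: transpose_matrix_vector)
  have Kv: "mpow B t *v v = v - K *v (A *v v)" for v
  proof -
    have "(mat 1 - mpow B t) *v v = (K ** A) *v v" using K by simp
    then show ?thesis by (simp add: mv_simps algebra_simps del: transpose_matrix_vector)
  qed
  have "mat 1 - mpow B (Suc t) = (\<eta> *\<^sub>R (W ** transpose A) + B ** K) ** A"
  proof (rule matrix_eq[THEN iffD2], intro allI)
    fix v
    show "(mat 1 - mpow B (Suc t)) *v v = ((\<eta> *\<^sub>R (W ** transpose A) + B ** K) ** A) *v v"
      by (simp add: mv_simps Kv Bv algebra_simps del: transpose_matrix_vector)
  qed
  then show ?case unfolding B_def by blast
qed

lemma iter_closed:
  fixes A :: "real^'q::finite^'p::finite" and W :: "real^'q^'q" and P :: "real^'p^'q"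
  assumes AP: "A ** P = mat 1"
  shows "dip_iter \<eta> W A y t = ((mat 1 - mpow (mat 1 - \<eta> *\<^sub>R (W ** transpose A ** A)) t) ** P) *v y"
proof (induction t)
  case 0
  show ?case by simp
next
  case (Suc t)
  define B where "B = mat 1 - \<eta> *\<^sub>R (W ** transpose A ** A)"
  have Bv: "B *v v = v - \<eta> *\<^sub>R (W *v (transpose A *v (A *v v)))" for v
    by (simp add: B_def mv_simps del: transpose_matrix_vector)
  have APv: "A *v (P *v v) = v" for v by (simp add: matrix_vector_mul_assoc AP)
  have z: "dip_iter \<eta> W A y t = P *v y - mpow B t *v (P *v y)"
    using Suc by (simp add: B_def mv_simps del: transpose_matrix_vector)
  have Az: "A *v dip_iter \<eta> W A y t = y - A *v (mpow B t *v (P *v y))"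
    by (simp add: z APv mv_simps del: transpose_matrix_vector)
  have "dip_iter \<eta> W A y (Suc t) = ((mat 1 - mpow B (Suc t)) ** P) *v y"
    by (simp add: Az del: transpose_matrix_vector) (simp add: z Bv mv_simps algebra_simps del: transpose_matrix_vector)
  then show ?case by (simp add: B_def)
qed


theorem theorem2:
  fixes A :: "real^'q^'p" and W :: "real^'q^'q" and x :: "real^'q"
    and \<eta> \<sigma> :: real and t :: nat and \<nu> :: "'p \<Rightarrow> real"
  assumes "rank A = CARD('p)"
    and "sym_psd W"
    and "\<eta> > 0"
    and "\<sigma> > 0"
    and "singular_values ((mat 1 - mpow (mat 1 - \<eta> *\<^sub>R (W ** transpose A ** A)) t) ** pinv A) \<nu>"
  shows "(\<integral>n. (norm (dip_iter \<eta> W A (A *v x + n) t - x))\<^sup>2 \<partial>gaussian_vec \<sigma>)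
         = (norm (mpow (mat 1 - \<eta> *\<^sub>R (W ** transpose A ** A)) t *v x))\<^sup>2
           + \<sigma>\<^sup>2 * (\<Sum>i\<in>UNIV. (\<nu> i)\<^sup>2)"
proof -
  define Q where "Q = mpow (mat 1 - \<eta> *\<^sub>R (W ** transpose A ** A)) t"
  define M where "M = (mat 1 - Q) ** pinv A"
  have AP: "A ** pinv A = mat 1" by (rule pinv_right[OF assms(1)])
  obtain K where K: "mat 1 - Q = K ** A" unfolding Q_def using mpow_KA by blast
  have MA: "M ** A = mat 1 - Q"
  proof -
    have "M ** A = K ** ((A ** pinv A) ** A)" by (simp add: M_def K matrix_mul_assoc)
    also have "\<dots> = mat 1 - Q" by (simp add: AP K)
    finally show ?thesis .
  qed
  have pt: "dip_iter \<eta> W A (A *v x + n) t - x = M *v n - Q *v x" for n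
  proof -
    have "dip_iter \<eta> W A (A *v x + n) t = M *v (A *v x + n)"
      unfolding M_def Q_def by (rule iter_closed[OF AP])
    also have "\<dots> = (M ** A) *v x + M *v n"
      by (simp add: matrix_vector_right_distrib matrix_vector_mul_assoc)
    also have "\<dots> = x - Q *v x + M *v n"
      by (simp add: MA matrix_vector_mult_diff_rdistrib)
    finally show ?thesis by simp
  qed
  have "(\<integral>n. (norm (dip_iter \<eta> W A (A *v x + n) t - x))\<^sup>2 \<partial>gaussian_vec \<sigma>)
      = (\<integral>n. (norm (M *v n - Q *v x))\<^sup>2 \<partial>gaussian_vec \<sigma>)"
    by (simp only: pt)
  also have "\<dots> = (norm (Q *v x))\<^sup>2 + \<sigma>\<^sup>2 * (\<Sum>j\<in>UNIV. \<Sum>i\<in>UNIV. (M$j$i)\<^sup>2)"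
    by (rule gauss_quad[OF assms(4)])
  also have "(\<Sum>j\<in>UNIV. \<Sum>i\<in>UNIV. (M$j$i)\<^sup>2) = (\<Sum>i\<in>UNIV. (\<nu> i)\<^sup>2)"
    by (rule frob_sv) (use assms(5) in \<open>simp add: M_def Q_def\<close>)
  finally show ?thesis by (simp add: Q_def)
qed

end
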